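(* Let $p(m,n)$ be as defined in the context, and let $x^N_0,y^N_0\in N^{-1}\mathbb{Z}_{>0}$ with $x^N_0\to x_0>0$ and $y^N_0\to y_0>0$ as $N\to\infty$. If $x_0\ne y_0$, then $$\lim_{N\to\infty}p(Nx^N_0,Ny^N_0)=\mathbf 1_{\{x_0<y_0\}}.$$
   Context: For integers $m,n\ge0$ with $m+n>0$, $p(m,n)$ is the unique function satisfying $p(m,n)=\frac{n}{m+n}p(m-1,n)+\frac{m}{m+n}p(m,n-1)$ for $m,n>0$, with $p(m,0)=0$ for $m>0$ and $p(0,n)=1$ for $n>0$. It is the probability that player A (starting with $m$ units) is ruined before player B (starting with $n$ units) when, from state $(m,n)$, B loses a unit with probability $m/(m+n)$ and A loses a unit with probability $n/(m+n)$. *)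

theory Defs
  imports "HOL-Analysis.Analysis"
begin

text \<open>Ruin probability p(m,n). The value at (0,0) is not specified by the paper
  and is set to 0 by convention (it is never reached from states with m,n > 0).\<close>
fun ruin_p :: "nat \<Rightarrow> nat \<Rightarrow> real" where
  "ruin_p 0 0 = 0"
| "ruin_p 0 (Suc n) = 1"
| "ruin_p (Suc m) 0 = 0"
| "ruin_p (Suc m) (Suc n) =
     real (Suc n) / real (Suc m + Suc n) * ruin_p m (Suc n)
   + real (Suc m) / real (Suc m + Suc n) * ruin_p (Suc m) n"

end

theory Submission
  imports Defs
begin

definition W :: "real \<Rightarrow> real \<Rightarrow> real \<Rightarrow> real" where
  "W c m n = (n*(n+1) - m*(m+1) - c)^2 + 4*m*n*(m+n)"

lemma W_ident:
  fixes m n c :: real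
  shows "(m+n+2) * W c (m+1) (n+1) - (n+1) * W c m (n+1) - (m+1) * W c (m+1) n
     = 4*(m+n+1)*((m+1)^2+(n+1)^2)"
  unfolding W_def by (simp add: algebra_simps power2_eq_square)

lemma aux_comb:
  fixes t al be A B k x y :: real
  assumes "t*al = A" "t*be = B" "A + B = t"
  shows "t*(k*(1-(al*x+be*y))) = A*(k*(1-x)) + B*(k*(1-y))"
proof -
  have "t*(k*(1-(al*x+be*y))) = k*t - k*x*(t*al) - k*y*(t*be)" by (simp add: algebra_simps)
  also have "\<dots> = k*(A+B) - k*x*A - k*y*B" using assms by simp
  also have "\<dots> = A*(k*(1-x)) + B*(k*(1-y))" by (simp add: algebra_simps)
  finally show ?thesis .
qed

lemma ruin_bound:
  fixes c :: real
  assumes "c \<ge> 0"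
  shows "c^2 * (1 - ruin_p m n) \<le> W c (real m) (real n)"
proof (induction m n rule: ruin_p.induct)
  case 1 then show ?case by (simp add: W_def)
next
  case (2 n) then show ?case by (simp add: W_def)
next
  case (3 m)
  have "c^2 \<le> (- (real (Suc m) * (real (Suc m) + 1)) - c)^2"
    using assms by (simp add: power2_eq_square algebra_simps)
  then show ?case by (simp add: W_def algebra_simps power2_eq_square)
next
  case (4 m n)
  define M where "M = real m" 
  define N where "N = real n"
  have M0: "M \<ge> 0" "N \<ge> 0" unfolding M_def N_def by auto
  have s: "real (Suc m + Suc n) = M + N + 2" unfolding M_def N_def by simp
  have sp: "M + N + 2 > 0" using M0 by simp
  have e: "ruin_p (Suc m) (Suc n) = (N+1)/(M+N+2) * ruin_p m (Suc n) + (M+1)/(M+N+2) * ruin_p (Suc m) n"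
    using s unfolding M_def N_def by (simp only: ruin_p.simps) (simp add: algebra_simps)
  have IH1: "c^2 * (1 - ruin_p m (Suc n)) \<le> W c M (N+1)" using 4(1) unfolding M_def N_def by (simp add: add.commute)
  have IH2: "c^2 * (1 - ruin_p (Suc m) n) \<le> W c (M+1) N" using 4(2) unfolding M_def N_def by (simp add: add.commute)
  have "(M+N+2) * (c^2 * (1 - ruin_p (Suc m) (Suc n)))
      = (N+1) * (c^2 * (1 - ruin_p m (Suc n))) + (M+1) * (c^2 * (1 - ruin_p (Suc m) n))"
    unfolding e by (rule aux_comb) (use sp in auto)
  also have "\<dots> \<le> (N+1) * W c M (N+1) + (M+1) * W c (M+1) N"
    using IH1 IH2 M0 by (intro add_mono mult_left_mono) auto
  also have "\<dots> \<le> (M+N+2) * W c (M+1) (N+1)"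
    using W_ident[of M N c] M0 by (smt (verit) mult_nonneg_nonneg zero_le_power2)
  finally have "(M+N+2) * (c^2 * (1 - ruin_p (Suc m) (Suc n))) \<le> (M+N+2) * W c (M+1) (N+1)" .
  then have "c^2 * (1 - ruin_p (Suc m) (Suc n)) \<le> W c (M+1) (N+1)" using sp by simp
  then show ?case unfolding M_def N_def by (simp add: add.commute)
qed

lemma ruin_le1: "ruin_p m n \<le> 1"
proof (induction m n rule: ruin_p.induct)
  case (4 m n)
  have d: "real (Suc m + Suc n) \<noteq> 0" by simp
  have s: "real (Suc n) / real (Suc m + Suc n) + real (Suc m) / real (Suc m + Suc n) = 1"
    unfolding add_divide_distrib[symmetric] using d by (simp del: of_nat_Suc of_nat_add add: of_nat_add[symmetric])
  show ?case unfolding ruin_p.simps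
    by (rule convex_bound_le[OF 4(1) 4(2)]) (use s in auto)
qed auto

lemma ruin_sym: "m + n > 0 \<Longrightarrow> ruin_p m n + ruin_p n m = 1"
proof (induction m n rule: ruin_p.induct)
  case (4 m n)
  have a: "ruin_p m (Suc n) + ruin_p (Suc n) m = 1" using 4(1) by simp
  have b: "ruin_p (Suc m) n + ruin_p n (Suc m) = 1" using 4(2) by simp
  have "ruin_p (Suc m) (Suc n) + ruin_p (Suc n) (Suc m)
     = real (Suc n) / real (Suc m + Suc n) * (ruin_p m (Suc n) + ruin_p (Suc n) m)
     + real (Suc m) / real (Suc m + Suc n) * (ruin_p (Suc m) n + ruin_p n (Suc m))"
    by (simp only: ruin_p.simps add.commute[of "Suc n" "Suc m"]) (simp only: ring_distribs add_ac)
  also have "\<dots> = 1" unfolding a b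
  proof -
    have d: "real (Suc m + Suc n) \<noteq> 0" by simp
    show "real (Suc n) / real (Suc m + Suc n) * 1 + real (Suc m) / real (Suc m + Suc n) * 1 = 1"
      unfolding mult_1_right add_divide_distrib[symmetric] using d by (simp del: of_nat_Suc of_nat_add add: of_nat_add[symmetric])
  qed
  finally show ?case .
qed auto

lemma FG: fixes A B n :: real assumes "n > 0"
  shows "B*(B+1) - A*(A+1) = n^2 * ((B/n)^2 + (B/n)*(1/n) - (A/n)^2 - (A/n)*(1/n))"
proof -
  have "n^2 * ((B/n)^2 + (B/n)*(1/n) - (A/n)^2 - (A/n)*(1/n)) = (n*(B/n))^2 + (n*(B/n)) - (n*(A/n))^2 - n*(A/n)"
    by (simp add: power2_eq_square algebra_simps)
  also have "\<dots> = B^2 + B - A^2 - A" using assms by simp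
  finally show ?thesis by (simp add: power2_eq_square algebra_simps)
qed
lemma BB: fixes A B n F :: real assumes "n > 0" "F = n^2 * g" "g \<noteq> 0"
  shows "4*A*B*(A+B) = F^2 * (4 * (A/n) * (B/n) * (A/n + B/n) * (1/n) / g^2)"
proof -
  have "4 * (A/n) * (B/n) * (A/n + B/n) * (1/n) = 4*A*B*(A+B) / n^4"
    using assms by (simp add: field_simps power4_eq_xxxx)
  then show ?thesis using assms by (simp add: field_simps power2_eq_square power4_eq_xxxx)
qed

lemma key:
  fixes a b :: "nat \<Rightarrow> nat" and x0 y0 :: real
  assumes xlim: "(\<lambda>N. real (a N) / real N) \<longlonglongrightarrow> x0"
    and ylim: "(\<lambda>N. real (b N) / real N) \<longlonglongrightarrow> y0"
    and "x0 > 0" and "x0 < y0"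
  shows "(\<lambda>N. ruin_p (a N) (b N)) \<longlonglongrightarrow> 1"
proof -
  define u where "u N = real (a N) / real N" for N
  define v where "v N = real (b N) / real N" for N
  define G where "G N = v N ^ 2 + v N * (1 / real N) - u N ^ 2 - u N * (1 / real N)" for N
  define B where "B N = 4 * u N * v N * (u N + v N) * (1 / real N) / (G N)^2" for N
  have inv: "(\<lambda>N. 1 / real N) \<longlonglongrightarrow> 0"
    using lim_const_over_n[of 1] by simp
  have u: "u \<longlonglongrightarrow> x0" using xlim unfolding u_def by simp
  have v: "v \<longlonglongrightarrow> y0" using ylim unfolding v_def by simp
  have G: "G \<longlonglongrightarrow> y0^2 + y0*0 - x0^2 - x0*0"
    unfolding G_def by (intro tendsto_intros u v inv)
  have gpos: "y0^2 - x0^2 > 0" using assms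
    using power_strict_mono[of x0 y0 2] by simp
  have eq: "y0^2 + y0*0 - x0^2 - x0*0 = y0^2 - x0^2" by simp
  have G': "G \<longlonglongrightarrow> y0^2 - x0^2" using G unfolding eq .
  have evG: "eventually (\<lambda>N. G N > 0) sequentially"
    using order_tendstoD(1)[OF G' gpos] .
  have "B \<longlonglongrightarrow> 4 * x0 * y0 * (x0 + y0) * 0 / (y0^2 - x0^2)^2"
    unfolding B_def using gpos by (intro tendsto_intros u v inv G') auto
  then have B0: "B \<longlonglongrightarrow> 0" by simp
  have ev: "eventually (\<lambda>N. 0 \<le> 1 - ruin_p (a N) (b N) \<and> 1 - ruin_p (a N) (b N) \<le> B N) sequentially"
    using evG eventually_gt_at_top[of 0]
  proof eventually_elim
    case (elim N)
    have Npos: "real N > 0" using elim by simp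
    define F where "F = real (b N) * (real (b N) + 1) - real (a N) * (real (a N) + 1)"
    have FG: "F = real N ^ 2 * G N"
      unfolding F_def G_def u_def v_def by (rule FG[OF Npos])
    have Fpos: "F > 0" using FG elim Npos by simp
    have "F^2 * (1 - ruin_p (a N) (b N)) \<le> W F (real (a N)) (real (b N))"
      using ruin_bound[of F] Fpos by simp
    also have "\<dots> = 4 * real (a N) * real (b N) * (real (a N) + real (b N))"
      unfolding W_def F_def by simp
    finally have h: "F^2 * (1 - ruin_p (a N) (b N)) \<le> 4 * real (a N) * real (b N) * (real (a N) + real (b N))" .
    have "4 * real (a N) * real (b N) * (real (a N) + real (b N)) = F^2 * B N"
      unfolding B_def u_def v_def by (rule BB[OF Npos FG]) (use elim in auto)
    with h have "F^2 * (1 - ruin_p (a N) (b N)) \<le> F^2 * B N" by simp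
    then have "1 - ruin_p (a N) (b N) \<le> B N" using Fpos by simp
    then show ?case using ruin_le1[of "a N" "b N"] by simp
  qed
  have "(\<lambda>N. 1 - ruin_p (a N) (b N)) \<longlonglongrightarrow> 0"
    by (rule tendsto_sandwich[OF _ _ tendsto_const B0]) (use ev in \<open>auto elim: eventually_mono\<close>)
  then have "(\<lambda>N. 1 - (1 - ruin_p (a N) (b N))) \<longlonglongrightarrow> 1 - 0"
    by (intro tendsto_intros)
  then show ?thesis by simp
qed

theorem mainTheorem8:
  fixes a b :: "nat \<Rightarrow> nat" and x0 y0 :: real
  assumes apos: "\<And>N. N \<ge> 1 \<Longrightarrow> a N > 0"
    and bpos: "\<And>N. N \<ge> 1 \<Longrightarrow> b N > 0"
    and xlim: "(\<lambda>N. real (a N) / real N) \<longlonglongrightarrow> x0"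
    and ylim: "(\<lambda>N. real (b N) / real N) \<longlonglongrightarrow> y0"
    and "x0 > 0" and "y0 > 0" and "x0 \<noteq> y0"
  shows "(\<lambda>N. ruin_p (a N) (b N)) \<longlonglongrightarrow> (if x0 < y0 then 1 else 0)"
proof (cases "x0 < y0")
  case True
  have "(\<lambda>N. ruin_p (a N) (b N)) \<longlonglongrightarrow> 1"
    by (rule key[OF xlim ylim]) (use assms True in auto)
  then show ?thesis using True by simp
next
  case False
  then have lt: "y0 < x0" using assms by simp
  have k: "(\<lambda>N. ruin_p (b N) (a N)) \<longlonglongrightarrow> 1"
    by (rule key[OF ylim xlim]) (use assms lt in auto)
  then have l: "(\<lambda>N. 1 - ruin_p (b N) (a N)) \<longlonglongrightarrow> 1 - 1" by (intro tendsto_intros)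
  have ev: "eventually (\<lambda>N. 1 - ruin_p (b N) (a N) = ruin_p (a N) (b N)) sequentially"
    using eventually_ge_at_top[of 1]
  proof eventually_elim
    case (elim N)
    then have "a N + b N > 0" using apos by auto
    from ruin_sym[OF this] show ?case by simp
  qed
  have "(\<lambda>N. ruin_p (a N) (b N)) \<longlonglongrightarrow> 1 - 1"
    by (rule Lim_transform_eventually[OF l ev])
  then show ?thesis using False by simp
qed

end
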